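(* Let $N>2$ be an integer, $K,L\in\mathbb{N}$ and $\sigma\in\Omega$. If $u\in\Psi^{K\times L}_{\mathrm{ver}}(\sigma)$ and $v\in\Psi^{K\times L}_{\mathrm{hor}}(\sigma)$ then $\|u-v\|_1\neq1$ (i.e. $u,v$ are not nearest neighbours in $\mathbb{Z}^2$).
   Context: Tiles: $T_{(x,y)}=[x-1,x+1]\times[y-1,y+1]$; $\Omega=\{\sigma\in\{0,1\}^{\mathbb{Z}^2}: \sigma(u)=\sigma(v)=1,u\ne v\Rightarrow\mathrm{int}(T_u)\cap\mathrm{int}(T_v)=\emptyset\}$; parity of the tile centered at $(x,y)$ is $(x-1\bmod2,y-1\bmod2)$. Faces are unit squares with integer corners. A stick edge is an edge of the nearest-neighbour lattice $\mathbb{Z}^2$ separating two faces contained in two tiles of distinct parities; a stick is a maximal path of stick edges (a vertical or horizontal segment). A stick has type $(\mathrm{ver},i)$ if it is vertical and lies on a line $x=x_1$ with $x_1\equiv i\pmod 2$, and type $(\mathrm{hor},i)$ if horizontal on a line $y=y_1$, $y_1\equiv i\pmod 2$. $R_{K\times L,(x,y)}=[x,x+K]\times[y,y+L]$. A vertical segment from $(x_1,y_1)$ to $(x_1,y_2)$, $y_1<y_2$, divides $R_{K\times L,(x,y)}$ if $y_1\le y$, $y+L\le y_2$, $x<x_1<x+K$; horizontal analogously. For a rectangle $R$ with dimensions divisible by $N$, $R^-$ is the rectangle with the same center and dimensions $\frac{N-2}{N}(\mathrm{Width}R,\mathrm{Height}R)$; a stick divides $R$ properly if it divides both $R$ and $R^-$.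 For $\pi$ a type, $\Psi^{K\times L}_\pi(\sigma)=\{(x,y)\in\mathbb{Z}^2: R_{KN\times LN,(xK,yL)}\text{ is properly divided by a stick of type }\pi\}$; $\Psi^{K\times L}_{\mathrm{ver}}=\Psi^{K\times L}_{(\mathrm{ver},0)}\cup\Psi^{K\times L}_{(\mathrm{ver},1)}$, $\Psi^{K\times L}_{\mathrm{hor}}=\Psi^{K\times L}_{(\mathrm{hor},0)}\cup\Psi^{K\times L}_{(\mathrm{hor},1)}$. *)

theory Defs
  imports "HOL-Analysis.Analysis"
begin

type_synonym config = "int \<times> int \<Rightarrow> bool"

definition tile :: "int \<times> int \<Rightarrow> (real \<times> real) set" where
  "tile u = cbox (real_of_int (fst u) - 1, real_of_int (snd u) - 1)
                 (real_of_int (fst u) + 1, real_of_int (snd u) + 1)"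

definition in_Omega :: "config \<Rightarrow> bool" where
  "in_Omega \<sigma> \<longleftrightarrow> (\<forall>u v. \<sigma> u \<and> \<sigma> v \<and> u \<noteq> v \<longrightarrow>
      interior (tile u) \<inter> interior (tile v) = {})"

definition parity :: "int \<times> int \<Rightarrow> int \<times> int" where
  "parity u = ((fst u - 1) mod 2, (snd u - 1) mod 2)"

definition face :: "int \<times> int \<Rightarrow> (real \<times> real) set" where
  "face f = cbox (real_of_int (fst f), real_of_int (snd f))
                 (real_of_int (fst f) + 1, real_of_int (snd f) + 1)"

definition separates_stick :: "config \<Rightarrow> int \<times> int \<Rightarrow> int \<times> int \<Rightarrow> bool" where
  "separates_stick \<sigma> f g \<longleftrightarrow> (\<exists>u v. \<sigma> u \<and> \<sigma> v \<and> face f \<subseteq> tile u \<and> face g \<subseteq> tile v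
      \<and> parity u \<noteq> parity v)"

datatype orient = Ver | Hor

text \<open>Edge number j on the line with coordinate c:
  Ver: the edge from (c,j) to (c,j+1), separating faces (c-1,j) and (c,j);
  Hor: the edge from (j,c) to (j+1,c), separating faces (j,c-1) and (j,c).\<close>
definition stick_edge :: "config \<Rightarrow> orient \<Rightarrow> int \<Rightarrow> int \<Rightarrow> bool" where
  "stick_edge \<sigma> d c j = (case d of
      Ver \<Rightarrow> separates_stick \<sigma> (c - 1, j) (c, j)
    | Hor \<Rightarrow> separates_stick \<sigma> (j, c - 1) (j, c))"

definition int_interval :: "int set \<Rightarrow> bool" where
  "int_interval I \<longleftrightarrow> (\<forall>a\<in>I. \<forall>b\<in>I. \<forall>k. a \<le> k \<and> k \<le> b \<longrightarrow> k \<in> I)"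

text \<open>A stick: a maximal straight path of stick edges, given by its orientation d,
  the coordinate c of its line, and the (nonempty, contiguous) set I of edge indices.\<close>
definition is_stick :: "config \<Rightarrow> orient \<Rightarrow> int \<Rightarrow> int set \<Rightarrow> bool" where
  "is_stick \<sigma> d c I \<longleftrightarrow> I \<noteq> {} \<and> int_interval I \<and> (\<forall>j\<in>I. stick_edge \<sigma> d c j) \<and>
     (\<forall>J. int_interval J \<and> I \<subseteq> J \<and> (\<forall>j\<in>J. stick_edge \<sigma> d c j) \<longrightarrow> J = I)"

definition seg :: "int set \<Rightarrow> real set" where
  "seg I = (\<Union>j\<in>I. {real_of_int j .. real_of_int j + 1})"

definition divides :: "orient \<Rightarrow> int \<Rightarrow> int set \<Rightarrow> int \<times> int \<Rightarrow> int \<Rightarrow> int \<Rightarrow> bool" where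
  "divides d c I p W H = (case d of
      Ver \<Rightarrow> fst p < c \<and> c < fst p + W \<and>
             {real_of_int (snd p) .. real_of_int (snd p + H)} \<subseteq> seg I
    | Hor \<Rightarrow> snd p < c \<and> c < snd p + H \<and>
             {real_of_int (fst p) .. real_of_int (fst p + W)} \<subseteq> seg I)"

text \<open>Proper division of [x,x+W] x [y,y+H] (W,H divisible by N): divides the rectangle and
  R^-, which has the same centre and dimensions (N-2)/N (W,H).\<close>
definition properly_divides :: "nat \<Rightarrow> orient \<Rightarrow> int \<Rightarrow> int set \<Rightarrow> int \<times> int \<Rightarrow> int \<Rightarrow> int \<Rightarrow> bool" where
  "properly_divides N d c I p W H \<longleftrightarrow> divides d c I p W H \<and>
     divides d c I (fst p + W div int N, snd p + H div int N)
       (W - 2 * (W div int N)) (H - 2 * (H div int N))"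

definition Psi :: "nat \<Rightarrow> nat \<Rightarrow> nat \<Rightarrow> orient \<times> int \<Rightarrow> config \<Rightarrow> (int \<times> int) set" where
  "Psi N K L \<pi> \<sigma> = {(x, y). \<exists>c I. is_stick \<sigma> (fst \<pi>) c I \<and> c mod 2 = snd \<pi> \<and>
      properly_divides N (fst \<pi>) c I (x * int K, y * int L) (int K * int N) (int L * int N)}"

definition Psi_ver :: "nat \<Rightarrow> nat \<Rightarrow> nat \<Rightarrow> config \<Rightarrow> (int \<times> int) set" where
  "Psi_ver N K L \<sigma> = Psi N K L (Ver, 0) \<sigma> \<union> Psi N K L (Ver, 1) \<sigma>"

definition Psi_hor :: "nat \<Rightarrow> nat \<Rightarrow> nat \<Rightarrow> config \<Rightarrow> (int \<times> int) set" where
  "Psi_hor N K L \<sigma> = Psi N K L (Hor, 0) \<sigma> \<union> Psi N K L (Hor, 1) \<sigma>"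

end

theory Submission
  imports Defs
begin

lemma box_pair_real:
  "((x::real), (y::real)) \<in> box (a, c) (b, d) \<longleftrightarrow> a < x \<and> x < b \<and> c < y \<and> y < d"
  by (auto simp: mem_box Basis_prod_def)

definition fits :: "int \<times> int \<Rightarrow> int \<times> int \<Rightarrow> bool" where
  "fits u f \<longleftrightarrow> fst u - 1 \<le> fst f \<and> fst f \<le> fst u \<and> snd u - 1 \<le> snd f \<and> snd f \<le> snd u"

lemma face_fits:
  assumes "face f \<subseteq> tile u" shows "fits u f"
proof -
  have "(real_of_int (fst f), real_of_int (snd f)) \<in> face f"
       "(real_of_int (fst f) + 1, real_of_int (snd f) + 1) \<in> face f"
    by (auto simp: face_def)
  hence "(real_of_int (fst f), real_of_int (snd f)) \<in> tile u"
       "(real_of_int (fst f) + 1, real_of_int (snd f) + 1) \<in> tile u"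
    using assms by auto
  thus ?thesis unfolding tile_def fits_def by auto
qed

lemma fits_interior:
  assumes "fits u f"
  shows "(real_of_int (fst f) + 1/2, real_of_int (snd f) + 1/2) \<in> interior (tile u)"
proof -
  have a: "real_of_int (fst u) - 1 \<le> real_of_int (fst f)" "real_of_int (fst f) \<le> real_of_int (fst u)"
    "real_of_int (snd u) - 1 \<le> real_of_int (snd f)" "real_of_int (snd f) \<le> real_of_int (snd u)"
    using assms unfolding fits_def by linarith+
  show ?thesis unfolding tile_def interior_cbox box_pair_real using a by linarith
qed

lemma fits_unique:
  assumes "in_Omega \<sigma>" "\<sigma> u" "\<sigma> v" "fits u f" "fits v f" shows "u = v"
  using assms fits_interior[OF assms(4)] fits_interior[OF assms(5)]
  unfolding in_Omega_def by blast

lemma no_cross: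
  assumes om: "in_Omega \<sigma>"
    and e1: "stick_edge \<sigma> Ver c (c' - 1)" and e2: "stick_edge \<sigma> Ver c c'"
    and e3: "stick_edge \<sigma> Hor c' (c - 1)" and e4: "stick_edge \<sigma> Hor c' c"
  shows False
proof -
  from e1 obtain tA tB where A: "\<sigma> tA" "fits tA (c-1, c'-1)" and B: "\<sigma> tB" "fits tB (c, c'-1)"
    and pAB: "parity tA \<noteq> parity tB"
    unfolding stick_edge_def separates_stick_def orient.case using face_fits by blast
  from e2 obtain tC tD where C: "\<sigma> tC" "fits tC (c-1, c')" and D: "\<sigma> tD" "fits tD (c, c')"
    and pCD: "parity tC \<noteq> parity tD"
    unfolding stick_edge_def separates_stick_def orient.case using face_fits by blast
  from e3 obtain tA' tC' where A': "\<sigma> tA'" "fits tA' (c-1, c'-1)" and C': "\<sigma> tC'" "fits tC' (c-1, c')"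
    and pAC: "parity tA' \<noteq> parity tC'"
    unfolding stick_edge_def separates_stick_def orient.case using face_fits by blast
  from e4 obtain tB' tD' where B': "\<sigma> tB'" "fits tB' (c, c'-1)" and D': "\<sigma> tD'" "fits tD' (c, c')"
    and pBD: "parity tB' \<noteq> parity tD'"
    unfolding stick_edge_def separates_stick_def orient.case using face_fits by blast
  have "tA' = tA" using fits_unique[OF om A'(1) A(1) A'(2) A(2)] .
  have "tC' = tC" using fits_unique[OF om C'(1) C(1) C'(2) C(2)] .
  have "tB' = tB" using fits_unique[OF om B'(1) B(1) B'(2) B(2)] .
  have "tD' = tD" using fits_unique[OF om D'(1) D(1) D'(2) D(2)] .
  have tA1: "fst tA = c - 1"
  proof (rule ccontr)
    assume "fst tA \<noteq> c - 1"
    hence "fits tA (c, c'-1)" using A(2) unfolding fits_def by auto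
    hence "tA = tB" using fits_unique[OF om A(1) B(1) _ B(2)] by blast
    thus False using pAB by simp
  qed
  have tA2: "snd tA = c' - 1"
  proof (rule ccontr)
    assume "snd tA \<noteq> c' - 1"
    hence "fits tA (c-1, c')" using A(2) unfolding fits_def by auto
    hence "tA = tC" using fits_unique[OF om A(1) C(1) _ C(2)] by blast
    thus False using pAC \<open>tA' = tA\<close> \<open>tC' = tC\<close> by simp
  qed
  have tB1: "fst tB = c + 1"
  proof (rule ccontr)
    assume "fst tB \<noteq> c + 1"
    hence "fits tB (c-1, c'-1)" using B(2) unfolding fits_def by auto
    hence "tB = tA" using fits_unique[OF om B(1) A(1) _ A(2)] by blast
    thus False using pAB by simp
  qed
  have tB2: "snd tB = c' - 1"
  proof (rule ccontr)
    assume "snd tB \<noteq> c' - 1"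
    hence "fits tB (c, c')" using B(2) unfolding fits_def by auto
    hence "tB = tD" using fits_unique[OF om B(1) D(1) _ D(2)] by blast
    thus False using pBD \<open>tB' = tB\<close> \<open>tD' = tD\<close> by simp
  qed
  have "parity tA = parity tB"
    unfolding parity_def tA1 tA2 tB1 tB2 by (simp add: mod_diff_eq[symmetric]; presburger)
  thus False using pAB by simp
qed

lemma seg_mem:
  assumes "{real_of_int a .. real_of_int b} \<subseteq> seg I" "a < c" "c < b"
  shows "c - 1 \<in> I \<and> c \<in> I"
proof -
  have "real_of_int c - 1/2 \<in> {real_of_int a .. real_of_int b}"
       "real_of_int c + 1/2 \<in> {real_of_int a .. real_of_int b}"
  proof -
    have "a + 1 \<le> c" "c + 1 \<le> b" using assms(2,3) by linarith+
    hence "real_of_int (a + 1) \<le> real_of_int c" "real_of_int (c + 1) \<le> real_of_int b"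
      by (simp_all only: of_int_le_iff)
    thus "real_of_int c - 1/2 \<in> {real_of_int a .. real_of_int b}"
       "real_of_int c + 1/2 \<in> {real_of_int a .. real_of_int b}" by auto
  qed
  hence "real_of_int c - 1/2 \<in> seg I" "real_of_int c + 1/2 \<in> seg I" using assms(1) by auto
  then obtain j j' where j: "j \<in> I" "real_of_int j \<le> real_of_int c - 1/2" "real_of_int c - 1/2 \<le> real_of_int j + 1"
    and j': "j' \<in> I" "real_of_int j' \<le> real_of_int c + 1/2" "real_of_int c + 1/2 \<le> real_of_int j' + 1"
    unfolding seg_def by auto
  have "j < c" using j(2) by (simp add: of_int_less_iff[symmetric] del: of_int_less_iff) 
  moreover have "c - 1 < j + 1" using j(3) by (simp add: of_int_less_iff[symmetric] del: of_int_less_iff)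
  ultimately have "j = c - 1" by linarith
  have "j' < c + 1" using j'(2) by (simp add: of_int_less_iff[symmetric] del: of_int_less_iff) 
  moreover have "c < j' + 1" using j'(3) by (simp add: of_int_less_iff[symmetric] del: of_int_less_iff)
  ultimately have "j' = c" by linarith
  show ?thesis using j(1) j'(1) \<open>j = c - 1\<close> \<open>j' = c\<close> by simp
qed

lemma near_mult:
  fixes a b k :: int
  assumes "\<bar>a - b\<bar> \<le> 1" "k \<ge> 0"
  shows "b * k \<le> a * k + k" "a * k \<le> b * k + k"
proof -
  have "a = b - 1 \<or> a = b \<or> a = b + 1" using assms(1) by linarith
  thus "b * k \<le> a * k + k" "a * k \<le> b * k + k" using assms(2) by (auto simp: algebra_simps)
qed

theorem lemma5p1:
  fixes N K L :: nat and \<sigma> :: config and u v :: "int \<times> int"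
  assumes "N > 2" and "in_Omega \<sigma>"
    and "u \<in> Psi_ver N K L \<sigma>" and "v \<in> Psi_hor N K L \<sigma>"
  shows "\<bar>fst u - fst v\<bar> + \<bar>snd u - snd v\<bar> \<noteq> 1"
proof
  assume adj: "\<bar>fst u - fst v\<bar> + \<bar>snd u - snd v\<bar> = 1"
  obtain u1 u2 where u: "u = (u1, u2)" by fastforce
  obtain v1 v2 where v: "v = (v1, v2)" by fastforce
  define k where "k = int K"
  define l where "l = int L"
  define n where "n = int N"
  have k0: "k \<ge> 0" and l0: "l \<ge> 0" and n0: "n > 0" using assms(1) by (auto simp: k_def l_def n_def)
  have kd: "k * n div n = k" and ld: "l * n div n = l" using n0 by auto
  from assms(3) obtain c I where st: "is_stick \<sigma> Ver c I"
    and pd: "properly_divides N Ver c I (u1 * k, u2 * l) (k * n) (l * n)"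
    unfolding Psi_ver_def Psi_def u k_def l_def n_def by auto
  from assms(4) obtain c' I' where st': "is_stick \<sigma> Hor c' I'"
    and pd': "properly_divides N Hor c' I' (v1 * k, v2 * l) (k * n) (l * n)"
    unfolding Psi_hor_def Psi_def v k_def l_def n_def by auto
  have V: "u1 * k + k < c" "c < u1 * k + k + (k * n - 2 * k)"
    "{real_of_int (u2 * l) .. real_of_int (u2 * l + l * n)} \<subseteq> seg I"
    using pd unfolding properly_divides_def divides_def n_def[symmetric] kd ld by auto
  have H: "v2 * l + l < c'" "c' < v2 * l + l + (l * n - 2 * l)"
    "{real_of_int (v1 * k) .. real_of_int (v1 * k + k * n)} \<subseteq> seg I'"
    using pd' unfolding properly_divides_def divides_def n_def[symmetric] kd ld by auto
  have d1: "\<bar>u1 - v1\<bar> \<le> 1" "\<bar>u2 - v2\<bar> \<le> 1" using adj u v by auto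
  note m1 = near_mult[OF d1(1) k0] and m2 = near_mult[OF d1(2) l0]
  have "c' - 1 \<in> I \<and> c' \<in> I"
    by (rule seg_mem[OF V(3)]) (use H m2 in linarith)+
  moreover have "c - 1 \<in> I' \<and> c \<in> I'"
    by (rule seg_mem[OF H(3)]) (use V m1 in linarith)+
  ultimately have "stick_edge \<sigma> Ver c (c' - 1)" "stick_edge \<sigma> Ver c c'"
    "stick_edge \<sigma> Hor c' (c - 1)" "stick_edge \<sigma> Hor c' c"
    using st st' unfolding is_stick_def by auto
  thus False using no_cross[OF assms(2)] by blast
qed

end
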